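(* Let a pebble placement strategy $\Lambda$ be fixed: for every instance (a connected simple undirected anonymous graph $G$ with port numbers, a source node $s$ and a treasure node $t$), $\Lambda$ places classical pebbles on some set of nodes of $G$. Then there is no deterministic treasure hunt algorithm for an oblivious agent that, for every instance, brings the agent from $s$ to the treasure $t$ when pebbles are placed according to $\Lambda$. That is, for every deterministic oblivious agent algorithm there is an instance on which the agent never reaches the treasure.
   Context: An anonymous graph is a connected simple undirected graph whose nodes are unlabelled and indistinguishable; at each node $v$ the incident edges carry distinct local labels (port numbers) from $\{0,\dots,\deg(v)-1\}$, so each edge has two independent port numbers, one at each endpoint. An agent starts at a source node $s$ and must reach a stationary target node $t$ (the treasure). The agent acts in rounds; in each round it "looks" (learns the degree of its current node and whether a pebble is present there), computes, and then either moves along one chosen port or stays. A pebble is a permanent classical marker placed on a node by an oracle (the pebble placement strategy) before the search, with knowledge of the whole instance. The agent is oblivious: it remembers nothing from previous rounds, so in a deterministic algorithm its action in a round is a function only of the degree of the current node and whether the current node carries a pebble. *)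

theory Defs
  imports Main
begin

text \<open>Nodes are represented by natural numbers
(the names are invisible to the agent). V is the node set, deg v the degree of v,
and nbr v p the neighbour reached from v via port p (for p < deg v).\<close>

definition port_graph :: "nat set \<Rightarrow> (nat \<Rightarrow> nat) \<Rightarrow> (nat \<Rightarrow> nat \<Rightarrow> nat) \<Rightarrow> bool" where
  "port_graph V deg nbr \<longleftrightarrow>
     finite V \<and> V \<noteq> {} \<and>
     (\<forall>v\<in>V. \<forall>p<deg v. nbr v p \<in> V \<and> nbr v p \<noteq> v) \<and>
     (\<forall>v\<in>V. inj_on (nbr v) {..<deg v}) \<and>
     (\<forall>v\<in>V. \<forall>p<deg v. \<exists>q<deg (nbr v p). nbr (nbr v p) q = v) \<and>
     (\<forall>u\<in>V. \<forall>w\<in>V. (u, w) \<in> {(x, y). x \<in> V \<and> (\<exists>p<deg x. nbr x p = y)}\<^sup>*)"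

text \<open>An instance: graph, source s, treasure t.\<close>
type_synonym hunt_instance = "nat set \<times> (nat \<Rightarrow> nat) \<times> (nat \<Rightarrow> nat \<Rightarrow> nat) \<times> nat \<times> nat"

datatype action = Stay | Move nat

text \<open>A deterministic oblivious agent: its action depends only on the degree of
the current node and whether it carries a pebble.\<close>
type_synonym agent = "nat \<Rightarrow> bool \<Rightarrow> action"

type_synonym strategy = "hunt_instance \<Rightarrow> nat set"

text \<open>One round. Moving along a non-existent port (p \<ge> deg v) leaves the agent in place.\<close>
definition step :: "agent \<Rightarrow> nat set \<Rightarrow> (nat \<Rightarrow> nat) \<Rightarrow> (nat \<Rightarrow> nat \<Rightarrow> nat) \<Rightarrow> nat \<Rightarrow> nat" where
  "step A P deg nbr v =
     (case A (deg v) (v \<in> P) of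
        Stay \<Rightarrow> v
      | Move p \<Rightarrow> (if p < deg v then nbr v p else v))"

definition pos :: "agent \<Rightarrow> nat set \<Rightarrow> (nat \<Rightarrow> nat) \<Rightarrow> (nat \<Rightarrow> nat \<Rightarrow> nat) \<Rightarrow> nat \<Rightarrow> nat \<Rightarrow> nat" where
  "pos A P deg nbr s k = (step A P deg nbr ^^ k) s"

end

theory Submission
  imports Defs
begin

definition nb :: "nat \<Rightarrow> nat \<Rightarrow> nat \<Rightarrow> nat" where
  "nb r v p = (if v = 3 then p else if p = r then 3 else (v + (p + 3 - r) mod 3) mod 3)"
lemma all4: "(\<forall>v\<in>{0::nat,1,2,3}. Q v) = (Q 0 \<and> Q 1 \<and> Q 2 \<and> Q 3)" by simp
lemma all3: "(\<forall>p<(3::nat). Q p) = (Q 0 \<and> Q 1 \<and> Q 2)" by (auto simp: less_Suc_eq numeral_eq_Suc)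
lemma ex3: "(\<exists>p<(3::nat). Q p) = (Q 0 \<or> Q 1 \<or> Q 2)" by (auto simp: less_Suc_eq numeral_eq_Suc)
lemma inj3: "inj_on f {..<(3::nat)} = (f 0 \<noteq> f 1 \<and> f 0 \<noteq> f 2 \<and> f 1 \<noteq> f 2)"
  by (auto simp: inj_on_def less_Suc_eq numeral_eq_Suc)
lemma cases3: "(r::nat) < 3 \<Longrightarrow> r = 0 \<or> r = 1 \<or> r = 2" by auto
lemma R1: assumes "r < 3" shows "\<forall>v\<in>{0::nat,1,2,3}. \<forall>p<3. nb r v p \<in> {0,1,2,3} \<and> nb r v p \<noteq> v"
  using cases3[OF assms] unfolding all4 all3 by (elim disjE) (simp_all add: nb_def)
lemma R2: assumes "r < 3" shows "\<forall>v\<in>{0::nat,1,2,3}. inj_on (nb r v) {..<3}"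
  using cases3[OF assms] unfolding all4 inj3 by (elim disjE) (simp_all add: nb_def)
lemma R3: assumes "r < 3" shows "\<forall>v\<in>{0::nat,1,2,3}. \<forall>p<3. \<exists>q<3. nb r (nb r v p) q = v"
  using cases3[OF assms] unfolding all4 all3 ex3 by (elim disjE) (simp_all add: nb_def)
lemma R4: assumes "r < 3" shows "\<forall>u\<in>{0::nat,1,2,3}. \<forall>w\<in>{0::nat,1,2,3}. u \<noteq> w \<longrightarrow> (\<exists>p<3. nb r u p = w)"
  using cases3[OF assms] unfolding all4 ex3 by (elim disjE) (simp_all add: nb_def)

lemma pg: assumes "r < 3" shows "port_graph {0,1,2,3} (\<lambda>_. 3) (nb r)"
proof -
  have conn: "\<forall>u\<in>{0,1,2,3}. \<forall>w\<in>{0,1,2,3}. (u, w) \<in> {(x, y). x \<in> {0::nat,1,2,3} \<and> (\<exists>p<3. nb r x p = y)}\<^sup>*"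
  proof (intro ballI)
    fix u w :: nat assume u: "u \<in> {0,1,2,3}" and w: "w \<in> {0,1,2,3}"
    show "(u, w) \<in> {(x, y). x \<in> {0::nat,1,2,3} \<and> (\<exists>p<3. nb r x p = y)}\<^sup>*"
    proof (cases "u = w")
      case True then show ?thesis by (simp only: rtrancl.rtrancl_refl)
    next
      case False
      then have e: "\<exists>p<3. nb r u p = w" using R4[OF assms] u w by blast
      have "(u, w) \<in> {(x, y). x \<in> {0::nat,1,2,3} \<and> (\<exists>p<3. nb r x p = y)}"
        using u e by (simp only: mem_Collect_eq case_prod_conv)
      then show ?thesis by (rule r_into_rtrancl)
    qed
  qed
  have f: "finite {0::nat,1,2,3}" "{0::nat,1,2,3} \<noteq> {}" by auto
  show ?thesis unfolding port_graph_def
    by (intro conjI f R1[OF assms] R2[OF assms] R3[OF assms] conn)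
qed

lemma ex_r: fixes A :: agent shows "\<exists>r<3. \<forall>b. A 3 b \<noteq> Move r"
proof -
  have "\<exists>r<3. A 3 False \<noteq> Move r \<and> A 3 True \<noteq> Move r"
    unfolding ex3 by (cases "A 3 False"; cases "A 3 True") auto
  then show ?thesis by (metis (full_types))
qed

theorem theorem1:
  fixes \<Lambda> :: strategy and A :: agent
  shows "\<exists>V deg nbr s t. port_graph V deg nbr \<and> s \<in> V \<and> t \<in> V \<and>
           (\<forall>k. pos A (\<Lambda> (V, deg, nbr, s, t)) deg nbr s k \<noteq> t)"
proof -
  obtain r where r: "r < 3" "\<And>b. A 3 b \<noteq> Move r" using ex_r by blast
  define P where "P = \<Lambda> ({0,1,2,3}, \<lambda>_. 3, nb r, 0, 3)"
  have inv: "pos A P (\<lambda>_. 3) (nb r) 0 k < 3" for k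
  proof (induction k)
    case 0 then show ?case by (simp add: pos_def)
  next
    case (Suc k)
    define v where "v = pos A P (\<lambda>_. 3) (nb r) 0 k"
    have "v < 3" using Suc v_def by simp
    have eq: "pos A P (\<lambda>_. 3) (nb r) 0 (Suc k) = step A P (\<lambda>_. 3) (nb r) v"
      by (simp add: pos_def v_def)
    have "step A P (\<lambda>_. 3) (nb r) v < 3"
    proof (cases "A 3 (v \<in> P)")
      case Stay then show ?thesis using \<open>v < 3\<close> by (simp add: step_def)
    next
      case (Move p)
      then have "p \<noteq> r" using r(2) by metis
      then show ?thesis using Move \<open>v < 3\<close> by (simp add: step_def nb_def)
    qed
    then show ?case using eq by simp
  qed
  have ne: "\<forall>k. pos A P (\<lambda>_. 3) (nb r) 0 k \<noteq> 3" using inv by (metis less_irrefl)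
  have mem: "(0::nat) \<in> {0,1,2,3}" "(3::nat) \<in> {0,1,2,3}" by simp_all
  show ?thesis
    apply (rule exI[of _ "{0,1,2,3}"], rule exI[of _ "\<lambda>_. 3"], rule exI[of _ "nb r"],
           rule exI[of _ 0], rule exI[of _ 3])
    using ne unfolding P_def by (intro conjI pg[OF r(1)] mem ne[unfolded P_def])
qed

end
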